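(* Let $\eta:\mathbb{R}\to\mathbb{R}$ be defined by $\eta(x)=\frac32(1-|x|)^2$ for $|x|\le 1$ and $\eta(x)=0$ for $|x|>1$, so that $\hat\eta(k)=\frac{6}{k^3}(k-\sin k)$ for $k\neq 0$ and $\hat\eta(0)=1$. Then for all $k\in\mathbb{R}$, $$\frac{1}{1+\beta k^2}\le \hat\eta(k)\le \frac{1}{1+\alpha k^2},\qquad \alpha=\tfrac{1}{20},\ \beta=\tfrac{7}{40}.$$
   Context: The Fourier transform is $\hat f(k)=\int_{\mathbb{R}} e^{-ikx}f(x)\,\mathrm{d}x$. *)

theory Defs
  imports "HOL-Analysis.Analysis"
begin

definition fourier :: "(real \<Rightarrow> real) \<Rightarrow> real \<Rightarrow> complex" where
  "fourier f k = (LINT x|lborel. exp (- \<i> * complex_of_real (k * x)) * complex_of_real (f x))"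

definition eta :: "real \<Rightarrow> real" where
  "eta x = (if \<bar>x\<bar> \<le> 1 then 3/2 * (1 - \<bar>x\<bar>)^2 else 0)"

end

theory Submission
  imports Defs
begin

lemma mono_aux:
  fixes f g f' g' :: "real \<Rightarrow> real"
  assumes "\<And>x. (f has_real_derivative f' x) (at x)" "\<And>x. (g has_real_derivative g' x) (at x)"
    "f 0 \<le> g 0" "\<And>x. 0 \<le> x \<Longrightarrow> f' x \<le> g' x" "0 \<le> x"
  shows "f x \<le> g x"
proof -
  have "(\<lambda>x. g x - f x) 0 \<le> (\<lambda>x. g x - f x) x"
    by (rule DERIV_nonneg_imp_nondecreasing[OF assms(5)])
       (use assms in \<open>auto intro!: derivative_eq_intros exI\<close>)
  then show ?thesis using assms(3) by simp
qed

lemma s1: "0 \<le> x \<Longrightarrow> sin x \<le> (x::real)"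
  by (rule mono_aux[where f=sin and g="\<lambda>x. x" and f'=cos and g'="\<lambda>_. 1"]) (auto intro!: derivative_eq_intros)

lemma c2: "0 \<le> x \<Longrightarrow> 1 - x^2/2 \<le> cos (x::real)"
  by (rule mono_aux[where f="\<lambda>x. 1 - x^2/2" and g=cos and g'="\<lambda>x. - sin x" and f'="\<lambda>x. - x"]) (auto intro!: derivative_eq_intros dest: s1)

lemma s3: "0 \<le> x \<Longrightarrow> x - x^3/6 \<le> sin (x::real)"
  by (rule mono_aux[where f="\<lambda>x. x - x^3/6" and g=sin and g'="\<lambda>x. cos x" and f'="\<lambda>x. 1 - x^2/2"]) (auto intro!: derivative_eq_intros dest: c2)

lemma c4: "0 \<le> x \<Longrightarrow> cos (x::real) \<le> 1 - x^2/2 + x^4/24"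
  by (rule mono_aux[where f=cos and g="\<lambda>x. 1 - x^2/2 + x^4/24" and f'="\<lambda>x. - sin x" and g'="\<lambda>x. - x + x^3/6"]) (auto intro!: derivative_eq_intros dest: s3)

lemma s5: "0 \<le> x \<Longrightarrow> sin (x::real) \<le> x - x^3/6 + x^5/120"
  by (rule mono_aux[where f=sin and g="\<lambda>x. x - x^3/6 + x^5/120" and f'="\<lambda>x. cos x" and g'="\<lambda>x. 1 - x^2/2 + x^4/24"]) (auto intro!: derivative_eq_intros dest: c4)

lemma c6: "0 \<le> x \<Longrightarrow> 1 - x^2/2 + x^4/24 - x^6/720 \<le> cos (x::real)"
  by (rule mono_aux[where f="\<lambda>x. 1 - x^2/2 + x^4/24 - x^6/720" and g=cos and g'="\<lambda>x. - sin x" and f'="\<lambda>x. - x + x^3/6 - x^5/120"]) (auto intro!: derivative_eq_intros dest: s5)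

lemma s7: "0 \<le> x \<Longrightarrow> x - x^3/6 + x^5/120 - x^7/5040 \<le> sin (x::real)"
  by (rule mono_aux[where f="\<lambda>x. x - x^3/6 + x^5/120 - x^7/5040" and g=sin and g'="\<lambda>x. cos x" and f'="\<lambda>x. 1 - x^2/2 + x^4/24 - x^6/720"]) (auto intro!: derivative_eq_intros dest: c6)

lemma c8: "0 \<le> x \<Longrightarrow> cos (x::real) \<le> 1 - x^2/2 + x^4/24 - x^6/720 + x^8/40320"
  by (rule mono_aux[where f=cos and g="\<lambda>x. 1 - x^2/2 + x^4/24 - x^6/720 + x^8/40320" and f'="\<lambda>x. - sin x" and g'="\<lambda>x. - x + x^3/6 - x^5/120 + x^7/5040"]) (auto intro!: derivative_eq_intros dest: s7)

lemma pi_ub: "pi \<le> 3.15"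
proof (rule ccontr)
  assume "\<not> ?thesis"
  hence "1.575 < pi/2" by simp
  hence "0 < cos (1.575::real)" by (intro cos_gt_zero_pi) auto
  moreover have "(1 - 1.575^2/2 + 1.575^4/24 - 1.575^6/720 + 1.575^8/40320::real) < 0" by (simp add: power_divide)
  moreover note c8[of "1.575"]
  ultimately show False by simp
qed

lemma pi_lb: "2.875 \<le> pi"
proof (rule ccontr)
  assume "\<not> ?thesis"
  hence "pi/2 < 1.4375" by simp
  hence "cos (1.4375::real) \<le> 0" using cos_monotone_0_pi_le[of "pi/2" "1.4375"] pi_ge_two by simp
  moreover have "(1 - 1.4375^2/2 + 1.4375^4/24 - 1.4375^6/720 ::real) > 0" by (simp add: power_divide)
  moreover note c6[of "1.4375"]
  ultimately show False by simp
qed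


lemma sin_3pi: "sin (x::real) = sin (3*pi - x)"
  by (simp add: sin_diff)

lemma polyA: assumes "3.7 \<le> (k::real)" "k \<le> 8.2" shows "k^3 \<le> 6*(k - 1)*(1+7/40*k^2)"
proof -
  define u where "u = 41/5 - k"
  have u: "0 \<le> u" "u \<le> 4.5" using assms by (auto simp: u_def)
  have id: "6*(k - 1)*(1+7/40*k^2) - k^3 = 104/625 + 567/500*u + 9/50*u^2 - 1/20*u^3"
    unfolding u_def by algebra
  have "u^3 \<le> 4.5*u^2" using mult_right_mono[OF u(2), of "u^2"] by (simp add: power3_eq_cube power2_eq_square)
  moreover have "u^2 \<le> 4.5*u" using mult_right_mono[OF u(2) u(1)] by (simp add: power2_eq_square)
  ultimately show ?thesis using id u by linarith
qed

lemma polyB: assumes "11.5 \<le> (k::real)" shows "k^3 \<le> 6*(k - 1)*(1+7/40*k^2)"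
proof -
  define t where "t = k - 23/2"
  have t: "0 \<le> t" using assms by (auto simp: t_def)
  have id: "6*(k - 1)*(1+7/40*k^2) - k^3 = 29/160 + 27/16*t + 27/40*t^2 + 1/20*t^3"
    unfolding t_def by algebra
  have "0 \<le> 29/160 + 27/16*t + 27/40*t^2 + 1/20*t^3" using t by simp
  then show ?thesis using id by linarith
qed

lemma polyC: assumes "8.2 \<le> (k::real)" "k \<le> 11.5" shows "k^3 \<le> 6*(k - 0.96)*(1+7/40*k^2)"
proof -
  define w where "w = k - 9"
  have w: "- (4/5) \<le> w" using assms by (auto simp: w_def)
  have id: "6*(k - 0.96)*(1+7/40*k^2) - k^3 = 1521/500 + 3/500*w + 171/500*w^2 + 1/20*w^3"
    unfolding w_def by algebra
  have "- (4/5)*w^2 \<le> w*w^2" using mult_right_mono[OF w, of "w^2"] by simp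
  hence "- (4/5)*w^2 \<le> w^3" by (simp add: power3_eq_cube power2_eq_square)
  moreover have "0 \<le> w^2" by simp
  ultimately show ?thesis using id w by linarith
qed

lemma polyD: assumes "0 \<le> (y::real)" "y \<le> 1.25" shows "y - y^3/6 + y^5/120 \<le> 0.96"
proof -
  have y: "y \<le> 5/4" using assms by simp
  have a: "y^5 \<le> (5/4)^5" by (rule power_mono) (use assms in auto)
  hence a: "y^5 \<le> 3125/1024" by (simp add: power_divide)
  have "y*y \<le> (5/4)*(5/4)" by (rule mult_mono) (use assms in auto)
  hence b: "y^2 \<le> 25/16" by (simp add: power2_eq_square)
  have id: "(5/4)^3 - y^3 = (5/4 - y)*(25/16 + 5/4*y + y^2)"
    by algebra
  have "(5/4 - y)*(25/16 + 5/4*y + y^2) \<le> (5/4 - y)*(75/16)"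
    by (rule mult_left_mono) (use y b in auto)
  hence "(5/4)^3 - y^3 \<le> (5/4 - y)*(75/16)" using id by simp
  moreover note a
  ultimately show ?thesis using y by (simp add: field_simps)
qed

lemma polyE: assumes "4.6 \<le> (k::real)" shows "6*(k + 1)*(1+1/20*k^2) \<le> k^3"
proof -
  define t where "t = k - 23/5"
  have t: "0 \<le> t" using assms by (auto simp: t_def)
  have id: "k^3 - 6*(k + 1)*(1+1/20*k^2) = 17617/625 + 8919/250*t + 234/25*t^2 + 7/10*t^3"
    unfolding t_def by algebra
  have "0 \<le> 17617/625 + 8919/250*t + 234/25*t^2 + 7/10*t^3" using t by simp
  then show ?thesis using id by linarith
qed

lemma L:
  fixes k :: real assumes k: "0 < k"
  shows "k^3 \<le> 6*(k - sin k)*(1+7/40*k^2)"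
proof -
  have f: "0 < 1+7/40*k^2" by (simp add: add_pos_nonneg)
  have key: "\<exists>b. sin k \<le> b \<and> k^3 \<le> 6*(k - b)*(1+7/40*k^2)"
  proof (cases "k \<le> 3.7")
    case True
    have "k^3 \<le> 6*(k - (k - k^3/6 + k^5/120))*(1+7/40*k^2)"
    proof -
      have "k*k \<le> 3.7*3.7" by (rule mult_mono) (use True k in auto)
      hence "k^2 \<le> 13.69" by (simp add: power2_eq_square)
      hence "0 \<le> k^5 * (7/40 - 1/20 - 7/800*k^2)" using k by (intro mult_nonneg_nonneg) auto
      moreover have "6*(k - (k - k^3/6 + k^5/120))*(1+7/40*k^2) - k^3 = k^5 * (7/40 - 1/20 - 7/800*k^2)"
        by algebra
      ultimately show ?thesis by linarith
    qed
    then show ?thesis using s5[of k] k by auto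
  next
    case c1: False
    show ?thesis
    proof (cases "k \<le> 8.2 \<or> 11.5 \<le> k")
      case True
      have "k^3 \<le> 6*(k - 1)*(1+7/40*k^2)" using True c1 polyA polyB by auto
      then show ?thesis by (intro exI[of _ 1]) auto
    next
      case False
      have "sin k \<le> 0.96"
      proof (cases "k \<le> 3*pi")
        case True
        define y where "y = 3*pi - k"
        have y: "0 \<le> y" "y \<le> 1.25" using True False pi_ub by (auto simp: y_def)
        then show ?thesis using s5[of y] polyD[of y] sin_3pi[of k] by (simp add: y_def)
      next
        case c2: False
        have "sin (k - 2*pi) \<le> 0" using c2 False pi_lb by (intro sin_le_zero) auto
        then show ?thesis by (simp add: sin_diff)
      qed
      moreover have "k^3 \<le> 6*(k - 0.96)*(1+7/40*k^2)" using False polyC by auto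
      ultimately show ?thesis by (intro exI[of _ "0.96"]) auto
    qed
  qed
  then obtain b where b: "sin k \<le> b" "k^3 \<le> 6*(k - b)*(1+7/40*k^2)" by auto
  have "6*(k - b)*(1+7/40*k^2) \<le> 6*(k - sin k)*(1+7/40*k^2)"
    using b(1) f by (intro mult_right_mono) auto
  with b show ?thesis by linarith
qed

lemma U:
  fixes k :: real assumes k: "0 < k"
  shows "6*(k - sin k)*(1+1/20*k^2) \<le> k^3"
proof -
  have f: "0 < 1+1/20*k^2" by (simp add: add_pos_nonneg)
  have key: "\<exists>b. b \<le> sin k \<and> 6*(k - b)*(1+1/20*k^2) \<le> k^3"
  proof (cases "k \<le> 4.6")
    case True
    have "6*(k - (k - k^3/6 + k^5/120 - k^7/5040))*(1+1/20*k^2) \<le> k^3"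
    proof -
      have "k*k \<le> 4.6*4.6" by (rule mult_mono) (use True k in auto)
      hence "k^2 \<le> 21.16" by (simp add: power2_eq_square)
      hence "0 \<le> k^7 * (1/400 - 1/840 - 1/16800*k^2)" using k by (intro mult_nonneg_nonneg) auto
      moreover have "6*(k - (k - k^3/6 + k^5/120 - k^7/5040))*(1+1/20*k^2) - k^3 = - (k^7 * (1/400 - 1/840 - 1/16800*k^2))"
        by algebra
      ultimately show ?thesis by linarith
    qed
    then show ?thesis using s7[of k] k by auto
  next
    case False
    have "6*(k + 1)*(1+1/20*k^2) \<le> k^3" using False polyE by auto
    then show ?thesis by (intro exI[of _ "-1"]) auto
  qed
  then obtain b where b: "b \<le> sin k" "6*(k - b)*(1+1/20*k^2) \<le> k^3" by auto
  have "6*(k - sin k)*(1+1/20*k^2) \<le> 6*(k - b)*(1+1/20*k^2)"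
    using b(1) f by (intro mult_right_mono) auto
  with b show ?thesis by linarith
qed


lemma ftc_c:
  fixes c :: complex and a b :: real and G :: "complex \<Rightarrow> complex" and g :: "complex \<Rightarrow> complex"
  assumes "a \<le> b" "\<And>z. (G has_field_derivative g z) (at z)"
  shows "((\<lambda>x. g (of_real x)) has_integral (G (of_real b) - G (of_real a))) {a..b}"
  using fundamental_theorem_of_calculus[of a b "\<lambda>x. G (of_real x)" "\<lambda>x. g (of_real x)"] assms
    has_vector_derivative_real_field by blast

lemma integrand_eq: "exp (- \<i> * complex_of_real (k * x)) * complex_of_real (eta x)
   = (if x \<in> {-1..1} then exp (- \<i> * complex_of_real (k * x)) * complex_of_real (eta x) else 0)"
  by (auto simp: eta_def)

lemma fourier_has_integral:
  assumes "((\<lambda>x. exp (- \<i> * complex_of_real (k * x)) * complex_of_real (eta x)) has_integral I) {-1..1}"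
  shows "fourier eta k = I"
proof -
  let ?f = "\<lambda>x. exp (- \<i> * complex_of_real (k * x)) * complex_of_real (eta x)"
  have ceta: "continuous_on {-1..1} eta"
  proof -
    have "continuous_on {-1..1} (\<lambda>x::real. 3/2 * (1 - \<bar>x\<bar>)^2)" by (intro continuous_intros)
    moreover have "\<forall>x\<in>{-1..1}. eta x = 3/2 * (1 - \<bar>x\<bar>)^2" by (auto simp: eta_def)
    ultimately show ?thesis using continuous_on_cong by (metis (no_types, lifting))
  qed
  have "integrable lborel (\<lambda>x. indicator {-1..1::real} x *\<^sub>R ?f x)"
    by (intro borel_integrable_compact continuous_intros ceta) auto
  moreover have "(\<lambda>x. indicator {-1..1::real} x *\<^sub>R ?f x) = ?f"
    by (rule ext) (auto simp: indicator_def eta_def)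
  ultimately have int: "integrable lborel ?f" by simp
  have "(?f has_integral fourier eta k) UNIV"
    using has_integral_integral_lborel[OF int] by (simp add: fourier_def)
  moreover have "(?f has_integral I) UNIV"
    using assms has_integral_restrict_UNIV[of "{-1..1}" ?f I] integrand_eq[of k] by simp
  ultimately show ?thesis using has_integral_unique by blast
qed


lemma eta_integral_nz:
  fixes k :: real assumes k: "k \<noteq> 0"
  defines "c \<equiv> - \<i> * complex_of_real k"
  shows "((\<lambda>x. exp (- \<i> * complex_of_real (k * x)) * complex_of_real (eta x)) has_integral
          (3 * (exp c - exp (-c)) / c^3 - 6 / c^2)) {-1..1}"
proof -
  have c: "c \<noteq> 0" using k by (simp add: c_def)
  define G1 where "G1 z = exp (c*z) * (3/2*(1-z)^2/c + 3*(1-z)/c^2 + 3/c^3)" for z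
  define G2 where "G2 z = exp (c*z) * (3/2*(1+z)^2/c - 3*(1+z)/c^2 + 3/c^3)" for z
  define d where "d = 1/c"
  have cd: "c * d = 1" using c by (simp add: d_def)
  have G1d: "G1 z = exp (c*z) * (3/2*(1-z)^2*d + 3*(1-z)*d^2 + 3*d^3)" for z
    by (simp add: G1_def d_def field_simps)
  have G2d: "G2 z = exp (c*z) * (3/2*(1+z)^2*d - 3*(1+z)*d^2 + 3*d^3)" for z
    by (simp add: G2_def d_def field_simps)
  have d1: "(G1 has_field_derivative exp (c*z) * (3/2*(1-z)^2)) (at z)" for z
    unfolding G1d[abs_def] apply (auto intro!: derivative_eq_intros)
    using cd by algebra
  have d2: "(G2 has_field_derivative exp (c*z) * (3/2*(1+z)^2)) (at z)" for z
    unfolding G2d[abs_def] apply (auto intro!: derivative_eq_intros)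
    using cd by algebra
  let ?f = "\<lambda>x. exp (- \<i> * complex_of_real (k * x)) * complex_of_real (eta x)"
  have h1: "((\<lambda>x. exp (c * complex_of_real x) * (3/2*(1 - complex_of_real x)^2)) has_integral (G1 1 - G1 0)) {0..1}"
    using ftc_c[of 0 1 G1, OF _ d1] by simp
  have h2: "((\<lambda>x. exp (c * complex_of_real x) * (3/2*(1 + complex_of_real x)^2)) has_integral (G2 0 - G2 (-1))) {-1..0}"
    using ftc_c[of "-1" 0 G2, OF _ d2] by simp
  have i1: "(?f has_integral (G1 1 - G1 0)) {0..1}"
    by (rule has_integral_eq[OF _ h1]) (auto simp: eta_def c_def mult.assoc)
  have i2: "(?f has_integral (G2 0 - G2 (-1))) {-1..0}"
    by (rule has_integral_eq[OF _ h2]) (auto simp: eta_def c_def mult.assoc)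
  have "(?f has_integral ((G2 0 - G2 (-1)) + (G1 1 - G1 0))) {-1..1}"
    by (rule has_integral_combine[OF _ _ i2 i1]) auto
  moreover have "(G2 0 - G2 (-1)) + (G1 1 - G1 0) = 3 * (exp c - exp (-c)) / c^3 - 6 / c^2"
    using c by (simp add: G1_def G2_def field_simps exp_minus power2_eq_square power3_eq_cube)
  ultimately show ?thesis by simp
qed

lemma eta_integral_z:
  shows "((\<lambda>x. exp (- \<i> * complex_of_real (0 * x)) * complex_of_real (eta x)) has_integral 1) {-1..1}"
proof -
  define G1 where "G1 (z::complex) = - (1/2)*(1-z)^3" for z
  define G2 where "G2 (z::complex) = (1/2)*(1+z)^3" for z
  have d1: "(G1 has_field_derivative (3/2*(1-z)^2)) (at z)" for z
    unfolding G1_def by (auto intro!: derivative_eq_intros simp: power2_eq_square field_simps)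
  have d2: "(G2 has_field_derivative (3/2*(1+z)^2)) (at z)" for z
    unfolding G2_def by (auto intro!: derivative_eq_intros simp: power2_eq_square field_simps)
  let ?f = "\<lambda>x. exp (- \<i> * complex_of_real (0 * x)) * complex_of_real (eta x)"
  have h1: "((\<lambda>x. (3/2*(1 - complex_of_real x)^2)) has_integral (G1 1 - G1 0)) {0..1}"
    using ftc_c[of 0 1 G1, OF _ d1] by simp
  have h2: "((\<lambda>x. (3/2*(1 + complex_of_real x)^2)) has_integral (G2 0 - G2 (-1))) {-1..0}"
    using ftc_c[of "-1" 0 G2, OF _ d2] by simp
  have i1: "(?f has_integral (G1 1 - G1 0)) {0..1}"
    by (rule has_integral_eq[OF _ h1]) (auto simp: eta_def)
  have i2: "(?f has_integral (G2 0 - G2 (-1))) {-1..0}"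
    by (rule has_integral_eq[OF _ h2]) (auto simp: eta_def)
  have "(?f has_integral ((G2 0 - G2 (-1)) + (G1 1 - G1 0))) {-1..1}"
    by (rule has_integral_combine[OF _ _ i2 i1]) auto
  moreover have "(G2 0 - G2 (-1)) + (G1 1 - G1 0) = 1"
    by (simp add: G1_def G2_def)
  ultimately show ?thesis by simp
qed

lemma closed_form:
  fixes k :: real assumes k: "k \<noteq> 0"
  defines "c \<equiv> - \<i> * complex_of_real k"
  shows "3 * (exp c - exp (-c)) / c^3 - 6 / c^2 = complex_of_real (6 * (k - sin k) / k^3)"
proof -
  have e1: "exp c = Complex (cos k) (- sin k)"
    using cis_conv_exp[of "-k"] by (simp add: c_def cis.ctr)
  have e2: "exp (-c) = Complex (cos k) (sin k)"
    using cis_conv_exp[of "k"] by (simp add: c_def cis.ctr)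
  have D: "exp c - exp (-c) = - 2 * \<i> * complex_of_real (sin k)"
    by (simp add: e1 e2 complex_eq_iff)
  have c3: "c^3 = \<i> * complex_of_real (k^3)" and c2: "c^2 = - complex_of_real (k^2)"
    by (simp_all add: c_def power3_eq_cube power2_eq_square complex_eq_iff)
  have "3 * (exp c - exp (-c)) / c^3 - 6 / c^2
     = 3 * (- 2 * \<i> * complex_of_real (sin k)) / (\<i> * complex_of_real (k^3)) - 6 / (- complex_of_real (k^2))"
    by (simp only: D c3 c2)
  also have "\<dots> = complex_of_real (6 * (k - sin k) / k^3)"
    using k by (simp add: field_simps power2_eq_square power3_eq_cube)
  finally show ?thesis .
qed

lemma Vbounds:
  fixes k :: real assumes k: "k \<noteq> 0"
  shows "1/(1+7/40*k^2) \<le> 6*(k - sin k)/k^3 \<and> 6*(k - sin k)/k^3 \<le> 1/(1+1/20*k^2)"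
proof -
  define K where "K = \<bar>k\<bar>"
  have K: "0 < K" using k by (simp add: K_def)
  have e1: "6*(k - sin k)/k^3 = 6*(K - sin K)/K^3"
    by (cases "k \<ge> 0") (auto simp: K_def minus_divide_left algebra_simps)
  have e2: "k^2 = K^2" by (simp add: K_def)
  have p1: "0 < 1+7/40*K^2" and p2: "0 < 1+1/20*K^2" and p3: "0 < K^3"
    using K by (auto simp: add_pos_nonneg)
  have "1/(1+7/40*K^2) \<le> 6*(K - sin K)/K^3"
    using L[OF K] p1 p3 by (simp add: field_simps)
  moreover have "6*(K - sin K)/K^3 \<le> 1/(1+1/20*K^2)"
    using U[OF K] p2 p3 by (simp add: field_simps)
  ultimately show ?thesis unfolding e1 e2 by simp
qed

theorem mainTheorem2:
  fixes k :: real
  defines "\<alpha> \<equiv> (1/20 :: real)" and "\<beta> \<equiv> (7/40 :: real)"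
  shows "Im (fourier eta k) = 0
    \<and> 1 / (1 + \<beta> * k^2) \<le> Re (fourier eta k)
    \<and> Re (fourier eta k) \<le> 1 / (1 + \<alpha> * k^2)"
proof (cases "k = 0")
  case True
  have "fourier eta k = 1" using fourier_has_integral[OF eta_integral_z] True by simp
  then show ?thesis using True by simp
next
  case False
  have "fourier eta k = complex_of_real (6 * (k - sin k) / k^3)"
    using fourier_has_integral[OF eta_integral_nz[OF False]] closed_form[OF False] by simp
  then show ?thesis using Vbounds[OF False] by (simp add: \<alpha>_def \<beta>_def)
qed

end
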